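(* Let $n\in\{2,3\}$, let $\Gamma\subset\Gamma_\infty$ be a nonempty bounded relatively open set, let $\tilde{\mathbf d}\in\mathbb{R}^{n-1}$ be a unit vector and $0\neq\psi\in\mathscr{D}(\Gamma)$, and for $k>0$ set $\phi_k(\tilde{\mathbf{x}}):=e^{{\mathrm{i}} k\tilde{\mathbf d}\cdot\tilde{\mathbf{x}}}\psi(\tilde{\mathbf{x}})$. Then there exist $C>0$ and $k_0>0$, independent of $k$, such that for all $k\ge k_0$, $$|\langle T_k\phi_k,\phi_k\rangle_{H^{-1/2}(\Gamma)\times\tilde H^{1/2}(\Gamma)}|\le Ck^{-1/2}\|\phi_k\|^2_{\tilde H^{1/2}_k(\Gamma)}.$$
   Context: $\Gamma_\infty:=\{\mathbf{x}\in\mathbb{R}^n:x_n=0\}$ is identified with $\mathbb{R}^{n-1}$; $\mathscr{D}(\Gamma)=C_0^\infty(\Gamma)$. Fourier transform: $\hat u(\boldsymbol{\xi})=(2\pi)^{-(n-1)/2}\int e^{-{\mathrm{i}}\boldsymbol{\xi}\cdot\mathbf{x}}u(\mathbf{x})\,\mathrm{d}\mathbf{x}$. $\|\phi\|^2_{\tilde H^{1/2}_k(\Gamma)}=\int(k^2+|\boldsymbol{\xi}|^2)^{1/2}|\hat\phi(\boldsymbol{\xi})|^2\,\mathrm{d}\boldsymbol{\xi}$. $T_k\phi=(T_k^\infty\phi)|_\Gamma$ with $\widehat{T_k^\infty\phi}(\boldsymbol{\xi})=\frac{{\mathrm{i}}}{2}Z(\boldsymbol{\xi})\hat\phi(\boldsymbol{\xi})$,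 $Z(\boldsymbol{\xi})=\sqrt{k^2-|\boldsymbol{\xi}|^2}$ for $|\boldsymbol{\xi}|\le k$ and ${\mathrm{i}}\sqrt{|\boldsymbol{\xi}|^2-k^2}$ for $|\boldsymbol{\xi}|>k$ (the acoustic hypersingular operator). For $\phi\in\mathscr{D}(\Gamma)$ the pairing equals $(T_k\phi,\phi)_{L^2(\Gamma)}=\frac{{\mathrm{i}}}{2}\int Z(\boldsymbol{\xi})|\hat\phi(\boldsymbol{\xi})|^2\,\mathrm{d}\boldsymbol{\xi}$. *)

theory Defs
  imports "HOL-Analysis.Analysis"
begin

text \<open>The screen \<Gamma>_\<infinity> = {x_n = 0} is identified with R^(n-1), modelled by a
 Euclidean space type 'a with DIM('a) = n - 1.\<close>

coinductive smooth_fun :: "('a::euclidean_space \<Rightarrow> complex) \<Rightarrow> bool" where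
  "(\<forall>x. f differentiable (at x)) \<Longrightarrow>
   (\<forall>v. smooth_fun (\<lambda>x. frechet_derivative f (at x) v)) \<Longrightarrow> smooth_fun f"

definition tsupport :: "('a::euclidean_space \<Rightarrow> complex) \<Rightarrow> 'a set" where
  "tsupport f = closure {x. f x \<noteq> 0}"

definition test_functions :: "'a::euclidean_space set \<Rightarrow> ('a \<Rightarrow> complex) set" where
  "test_functions \<Gamma> = {f. smooth_fun f \<and> compact (tsupport f) \<and> tsupport f \<subseteq> \<Gamma>}"

definition fourier :: "('a::euclidean_space \<Rightarrow> complex) \<Rightarrow> 'a \<Rightarrow> complex" where
  "fourier u \<xi> = complex_of_real ((2 * pi) powr (- real DIM('a) / 2)) *
      (LINT x|lborel. exp (- \<i> * complex_of_real (\<xi> \<bullet> x)) * u x)"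

definition Zsym :: "real \<Rightarrow> 'a::euclidean_space \<Rightarrow> complex" where
  "Zsym k \<xi> = (if norm \<xi> \<le> k then complex_of_real (sqrt (k\<^sup>2 - (norm \<xi>)\<^sup>2))
               else \<i> * complex_of_real (sqrt ((norm \<xi>)\<^sup>2 - k\<^sup>2)))"

text \<open>The duality pairing <T_k \<phi>, \<phi>> for \<phi> \<in> D(\<Gamma>), given by
 (i/2) \<integral> Z(\<xi>) |\<phi>^(\<xi>)|^2 d\<xi>.\<close>
definition hypersingular_pairing :: "real \<Rightarrow> ('a::euclidean_space \<Rightarrow> complex) \<Rightarrow> complex" where
  "hypersingular_pairing k \<phi> =
     (\<i> / 2) * (LINT \<xi>|lborel. Zsym k \<xi> * complex_of_real ((cmod (fourier \<phi> \<xi>))\<^sup>2))"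

definition Hhalf_k_normsq :: "real \<Rightarrow> ('a::euclidean_space \<Rightarrow> complex) \<Rightarrow> real" where
  "Hhalf_k_normsq k \<phi> =
     (LINT \<xi>|lborel. sqrt (k\<^sup>2 + (norm \<xi>)\<^sup>2) * (cmod (fourier \<phi> \<xi>))\<^sup>2)"

end

theory Submission
  imports Defs
begin

lemma fourier_meas:
  fixes \<psi> :: "'a::euclidean_space \<Rightarrow> complex"
  assumes "continuous_on UNIV \<psi>"
  shows "fourier \<psi> \<in> borel_measurable borel"
proof -
  have c: "continuous_on UNIV (\<lambda>p::'a\<times>'a. exp (- \<i> * complex_of_real (fst p \<bullet> snd p)) * \<psi> (snd p))"
    by (intro continuous_intros continuous_on_compose2[OF assms]) auto
  have "(\<lambda>p::'a\<times>'a. exp (- \<i> * complex_of_real (fst p \<bullet> snd p)) * \<psi> (snd p)) \<in> borel_measurable (borel \<Otimes>\<^sub>M lborel)"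
    using borel_measurable_continuous_onI[OF c] by (simp add: borel_prod[symmetric] cong: measurable_cong_sets)
  hence "(\<lambda>\<xi>. LINT x|lborel. exp (- \<i> * complex_of_real (\<xi> \<bullet> x)) * \<psi> x) \<in> borel_measurable borel"
    by (intro lborel.borel_measurable_lebesgue_integral) (simp add: case_prod_beta)
  thus ?thesis unfolding fourier_def[abs_def] by measurable
qed

lemma fourier_bound:
  fixes \<psi> :: "'a::euclidean_space \<Rightarrow> complex"
  shows "cmod (fourier \<psi> \<xi>) \<le> (2 * pi) powr (- real DIM('a) / 2) * (LINT x|lborel. cmod (\<psi> x))"
proof -
  have "cmod (LINT x|lborel. exp (- \<i> * complex_of_real (\<xi> \<bullet> x)) * \<psi> x) \<le> (LINT x|lborel. cmod (exp (- \<i> * complex_of_real (\<xi> \<bullet> x)) * \<psi> x))"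
    by (rule integral_norm_bound)
  also have "\<dots> = (LINT x|lborel. cmod (\<psi> x))"
    by (simp add: norm_mult)
  finally show ?thesis unfolding fourier_def by (simp add: norm_mult mult_left_mono)
qed

lemma fourier_mod:
  fixes \<psi> :: "'a::euclidean_space \<Rightarrow> complex"
  shows "fourier (\<lambda>x. exp (\<i> * complex_of_real (k * (d \<bullet> x))) * \<psi> x) \<xi> = fourier \<psi> (\<xi> - k *\<^sub>R d)"
proof -
  have "\<And>x. exp (- \<i> * complex_of_real (\<xi> \<bullet> x)) * (exp (\<i> * complex_of_real (k * (d \<bullet> x))) * \<psi> x)
     = exp (- \<i> * complex_of_real ((\<xi> - k *\<^sub>R d) \<bullet> x)) * \<psi> x"
    by (simp add: inner_diff_left algebra_simps flip: exp_add)
  thus ?thesis unfolding fourier_def by (simp only:)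
qed

lemma smooth_cont: "smooth_fun f \<Longrightarrow> continuous_on UNIV f"
  by (erule smooth_fun.cases) (auto intro: differentiable_imp_continuous_within continuous_at_imp_continuous_on)

lemma lint_shift:
  fixes f :: "'a::euclidean_space \<Rightarrow> 'b::{banach, second_countable_topology}"
  assumes "f \<in> borel_measurable borel"
  shows "(LINT \<xi>|lborel. f \<xi>) = (LINT \<eta>|lborel. f (c + \<eta>))"
proof -
  have "(LINT \<xi>|lborel. f \<xi>) = integral\<^sup>L (distr lborel borel ((+) c)) f"
    by (simp add: lborel_distr_plus)
  also have "\<dots> = (LINT \<eta>|lborel. f (c + \<eta>))"
    by (rule integral_distr) (use assms in auto)
  finally show ?thesis .
qed

lemma int_shift:
  fixes f :: "'a::euclidean_space \<Rightarrow> 'b::{banach, second_countable_topology}"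
  assumes "f \<in> borel_measurable borel"
  shows "integrable lborel f \<longleftrightarrow> integrable lborel (\<lambda>\<eta>. f (c + \<eta>))"
proof -
  have "integrable lborel f \<longleftrightarrow> integrable (distr lborel borel ((+) c)) f"
    by (simp add: lborel_distr_plus)
  also have "\<dots> \<longleftrightarrow> integrable lborel (\<lambda>\<eta>. f (c + \<eta>))"
    by (rule integrable_distr_eq) (use assms in auto)
  finally show ?thesis .
qed

lemma Zsym_meas[measurable]: "Zsym k \<in> borel_measurable borel"
  unfolding Zsym_def[abs_def] by measurable

lemma cmod_Zsym: "k \<ge> 0 \<Longrightarrow> cmod (Zsym k \<xi>) = sqrt \<bar>k\<^sup>2 - (norm \<xi>)\<^sup>2\<bar>"
proof -
  assume k: "k \<ge> 0"
  show ?thesis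
  proof (cases "norm \<xi> \<le> k")
    case True
    hence "(norm \<xi>)\<^sup>2 \<le> k\<^sup>2" by (simp add: power_mono)
    thus ?thesis using True by (simp add: Zsym_def norm_mult)
  next
    case False
    hence "(norm \<xi>)\<^sup>2 \<ge> k\<^sup>2" using k by (simp add: power_mono)
    thus ?thesis using False by (simp add: Zsym_def norm_mult)
  qed
qed

lemma Z1:
  fixes c :: "'a::euclidean_space"
  assumes "norm c = k" "k \<ge> 1"
  shows "cmod (Zsym k (c + \<eta>)) \<le> 2 * sqrt k * (1 + norm \<eta>)"
proof -
  have cc: "c \<bullet> c = k\<^sup>2" using assms(1) by (metis power2_norm_eq_inner)
  have e: "(norm (c+\<eta>))\<^sup>2 = k\<^sup>2 + 2 * (c \<bullet> \<eta>) + (norm \<eta>)\<^sup>2"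
    using cc by (simp add: power2_norm_eq_inner inner_add_left inner_add_right inner_commute)
  have "\<bar>c \<bullet> \<eta>\<bar> \<le> k * norm \<eta>" using Cauchy_Schwarz_ineq2[of c \<eta>] assms(1) by simp
  hence "\<bar>k\<^sup>2 - (norm (c+\<eta>))\<^sup>2\<bar> \<le> 2 * k * norm \<eta> + (norm \<eta>)\<^sup>2"
  proof -
    assume b: "\<bar>c \<bullet> \<eta>\<bar> \<le> k * norm \<eta>"
    have "\<bar>k\<^sup>2 - (norm (c+\<eta>))\<^sup>2\<bar> = \<bar>2*(c \<bullet> \<eta>) + (norm \<eta>)\<^sup>2\<bar>" unfolding e by simp
    also have "\<dots> \<le> \<bar>2*(c \<bullet> \<eta>)\<bar> + \<bar>(norm \<eta>)\<^sup>2\<bar>" by (rule abs_triangle_ineq)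
    also have "\<dots> = 2*\<bar>c \<bullet> \<eta>\<bar> + (norm \<eta>)\<^sup>2" by simp
    also have "\<dots> \<le> 2*(k * norm \<eta>) + (norm \<eta>)\<^sup>2" using b by linarith
    finally show ?thesis by (simp only: mult.assoc)
  qed
  also have "\<dots> \<le> (2 * sqrt k * (1 + norm \<eta>))\<^sup>2"
  proof -
    have "(2 * sqrt k * (1 + norm \<eta>))\<^sup>2 = 4 * k * (1 + norm \<eta>)\<^sup>2"
      using assms by (simp add: power_mult_distrib)
    moreover have "2 * k * norm \<eta> + (norm \<eta>)\<^sup>2 \<le> 4 * k * (1 + norm \<eta>)\<^sup>2"
    proof -
      have a: "(norm \<eta>)\<^sup>2 \<le> k * (norm \<eta>)\<^sup>2" using assms(2) mult_right_mono[of 1 k "(norm \<eta>)\<^sup>2"] by simp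
      have b: "0 \<le> k * norm \<eta>" "0 \<le> k" "0 \<le> k * (norm \<eta>)\<^sup>2" using assms(2) by auto
      have c: "4 * k * (1 + norm \<eta>)\<^sup>2 = 4*k + 8*(k * norm \<eta>) + 4*(k * (norm \<eta>)\<^sup>2)"
        by (simp add: power2_eq_square algebra_simps)
      have d: "2 * k * norm \<eta> = 2 * (k * norm \<eta>)" by simp
      show ?thesis unfolding c d using a b by linarith
    qed
    ultimately show ?thesis by simp
  qed
  finally show ?thesis using assms
    by (subst cmod_Zsym) (auto intro!: real_le_lsqrt)
qed

lemma Z2:
  assumes "k > 0"
  shows "sqrt (k\<^sup>2 + (norm \<xi>)\<^sup>2) \<le> 2 * cmod (Zsym k \<xi>) + 3 * k * indicator (ball 0 (2*k)) \<xi>"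
proof (cases "norm \<xi> < 2 * k")
  case True
  have s: "sqrt (k\<^sup>2 + (norm \<xi>)\<^sup>2) \<le> sqrt ((3*k)\<^sup>2)"
  proof (intro real_sqrt_le_mono)
    have "(norm \<xi>)\<^sup>2 \<le> (2*k)\<^sup>2" using True by (intro power_mono) auto
    moreover have "(2*k)\<^sup>2 = 4*k\<^sup>2" "(3*k)\<^sup>2 = 9*k\<^sup>2" "0 \<le> k\<^sup>2" by (simp_all add: power_mult_distrib)
    ultimately show "k\<^sup>2 + (norm \<xi>)\<^sup>2 \<le> (3*k)\<^sup>2" by linarith
  qed
  have s3: "sqrt ((3*k)\<^sup>2) = 3*k" using assms by (simp only: real_sqrt_abs) 
  have i: "indicator (ball 0 (2*k)) \<xi> = (1::real)" using True by (simp add: indicator_def)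
  have "0 \<le> cmod (Zsym k \<xi>)" by simp
  thus ?thesis unfolding i using s s3 by linarith
next
  case False
  have "sqrt (k\<^sup>2 + (norm \<xi>)\<^sup>2) \<le> 2 * sqrt \<bar>k\<^sup>2 - (norm \<xi>)\<^sup>2\<bar>"
  proof -
    have "(2*k)\<^sup>2 \<le> (norm \<xi>)\<^sup>2" using False assms by (intro power_mono) auto
    hence h: "4*k\<^sup>2 \<le> (norm \<xi>)\<^sup>2" by (simp add: power_mult_distrib)
    have z: "0 \<le> k\<^sup>2" by simp
    hence ab: "\<bar>k\<^sup>2 - (norm \<xi>)\<^sup>2\<bar> = (norm \<xi>)\<^sup>2 - k\<^sup>2" using h by (intro abs_of_nonpos[THEN trans]) linarith+
    have sq: "(2 * sqrt \<bar>k\<^sup>2 - (norm \<xi>)\<^sup>2\<bar>)\<^sup>2 = 4 * \<bar>k\<^sup>2 - (norm \<xi>)\<^sup>2\<bar>"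
      by (simp add: power_mult_distrib)
    have "k\<^sup>2 + (norm \<xi>)\<^sup>2 \<le> (2 * sqrt \<bar>k\<^sup>2 - (norm \<xi>)\<^sup>2\<bar>)\<^sup>2"
      unfolding sq unfolding ab using h by (simp add: right_diff_distrib, insert z, linarith)
    thus ?thesis by (intro real_le_lsqrt) auto
  qed
  thus ?thesis using False assms by (simp add: cmod_Zsym)
qed

lemma W1:
  fixes c :: "'a::euclidean_space"
  assumes "norm c = k" "k > 0"
  shows "1 + norm \<eta> \<le> 2 * (1 + k) / k * sqrt (k\<^sup>2 + (norm (c + \<eta>))\<^sup>2)"
proof -
  have s1: "k \<le> sqrt (k\<^sup>2 + (norm (c + \<eta>))\<^sup>2)" using assms by (intro real_le_rsqrt) auto
  have s2: "norm (c+\<eta>) \<le> sqrt (k\<^sup>2 + (norm (c + \<eta>))\<^sup>2)" by (intro real_le_rsqrt) auto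
  have "norm \<eta> \<le> k + norm (c + \<eta>)" using norm_triangle_ineq4[of "c+\<eta>" c] assms by simp
  hence "1 + norm \<eta> \<le> (1 + k)/k * k + norm (c+\<eta>)" using assms by simp
  also have "\<dots> \<le> (1 + k)/k * sqrt (k\<^sup>2 + (norm (c + \<eta>))\<^sup>2) + (1+k)/k * sqrt (k\<^sup>2 + (norm (c + \<eta>))\<^sup>2)"
  proof -
    have "1 \<le> (1+k)/k" using assms by simp
    hence "norm (c+\<eta>) \<le> (1+k)/k * sqrt (k\<^sup>2 + (norm (c + \<eta>))\<^sup>2)"
    proof -
      have "sqrt (k\<^sup>2 + (norm (c + \<eta>))\<^sup>2) \<le> (1+k)/k * sqrt (k\<^sup>2 + (norm (c + \<eta>))\<^sup>2)"
        using \<open>1 \<le> (1+k)/k\<close> mult_right_mono[of 1 "(1+k)/k" "sqrt (k\<^sup>2 + (norm (c + \<eta>))\<^sup>2)"] by simp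
      thus ?thesis using s2 by linarith
    qed
    moreover have "(1 + k)/k * k \<le> (1 + k)/k * sqrt (k\<^sup>2 + (norm (c + \<eta>))\<^sup>2)"
      using s1 assms by (intro mult_left_mono) auto
    ultimately show ?thesis by linarith
  qed
  also have "\<dots> = 2 * (1 + k) / k * sqrt (k\<^sup>2 + (norm (c + \<eta>))\<^sup>2)" by simp
  finally show ?thesis .
qed

lemma W2:
  fixes c :: "'a::euclidean_space"
  assumes "norm c = k" "k \<ge> 1"
  shows "sqrt (k\<^sup>2 + (norm (c + \<eta>))\<^sup>2) \<le> 3 * k * (1 + norm \<eta>)"
proof -
  have "sqrt (k\<^sup>2 + (norm (c + \<eta>))\<^sup>2) \<le> k + norm (c+\<eta>)"
    using assms by (intro real_le_lsqrt) (auto simp: power2_eq_square algebra_simps)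
  also have "\<dots> \<le> 2*k + norm \<eta>" using norm_triangle_ineq[of c \<eta>] assms by simp
  also have "\<dots> \<le> 3 * k * (1 + norm \<eta>)" using assms
  proof -
    have "norm \<eta> \<le> k * norm \<eta>" using assms mult_right_mono[of 1 k "norm \<eta>"] by simp
    moreover have "0 \<le> k * norm \<eta>" using assms by simp
    moreover have "3*k*(1+norm \<eta>) = 3*k + 3*(k*norm \<eta>)" by (simp add: algebra_simps)
    ultimately show ?thesis using assms by linarith
  qed
  finally show ?thesis .
qed

lemma caseB:
  fixes w :: "'a::euclidean_space \<Rightarrow> real" and d :: 'a
  assumes wm[measurable]: "w \<in> borel_measurable borel" and w0: "\<And>x. 0 \<le> w x" and wB: "\<And>x. w x \<le> Bs"
    and ni: "\<not> integrable lborel (\<lambda>\<eta>. (1 + norm \<eta>) * w \<eta>)"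
    and k: "k > 0" and d: "norm d = 1"
  shows "\<not> integrable lborel (\<lambda>\<xi>. sqrt (k\<^sup>2 + (norm \<xi>)\<^sup>2) * w (\<xi> - k *\<^sub>R d))"
    and "\<not> integrable lborel (\<lambda>\<xi>. Zsym k \<xi> * complex_of_real (w (\<xi> - k *\<^sub>R d)))"
proof -
  have nd: "norm (k *\<^sub>R d) = k" using k d by simp
  show h: "\<not> integrable lborel (\<lambda>\<xi>. sqrt (k\<^sup>2 + (norm \<xi>)\<^sup>2) * w (\<xi> - k *\<^sub>R d))"
  proof
    assume "integrable lborel (\<lambda>\<xi>. sqrt (k\<^sup>2 + (norm \<xi>)\<^sup>2) * w (\<xi> - k *\<^sub>R d))"
    hence "integrable lborel (\<lambda>\<eta>. sqrt (k\<^sup>2 + (norm (k *\<^sub>R d + \<eta>))\<^sup>2) * w (k *\<^sub>R d + \<eta> - k *\<^sub>R d))"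
      by (subst (asm) int_shift[where c="k *\<^sub>R d"]) auto
    hence "integrable lborel (\<lambda>\<eta>. 2 * (1 + k) / k * (sqrt (k\<^sup>2 + (norm (k *\<^sub>R d + \<eta>))\<^sup>2) * w \<eta>))"
      by simp
    note I = this
    have "integrable lborel (\<lambda>\<eta>. (1 + norm \<eta>) * w \<eta>)"
    proof (rule Bochner_Integration.integrable_bound[OF I])
      show "(\<lambda>\<eta>. (1 + norm \<eta>) * w \<eta>) \<in> borel_measurable lborel" by measurable
      show "AE x in lborel. norm ((1 + norm x) * w x) \<le> norm (2 * (1 + k) / k * (sqrt (k\<^sup>2 + (norm (k *\<^sub>R d + x))\<^sup>2) * w x))"
      proof (rule AE_I2)
        fix x
        have "(1 + norm x) * w x \<le> (2 * (1 + k) / k * sqrt (k\<^sup>2 + (norm (k *\<^sub>R d + x))\<^sup>2)) * w x"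
          using W1[OF nd k, of x] w0[of x] by (rule mult_right_mono)
        thus "norm ((1 + norm x) * w x) \<le> norm (2 * (1 + k) / k * (sqrt (k\<^sup>2 + (norm (k *\<^sub>R d + x))\<^sup>2) * w x))"
          using w0[of x] k by (simp add: abs_mult mult.assoc)
      qed
    qed
    with ni show False by simp
  qed
  show "\<not> integrable lborel (\<lambda>\<xi>. Zsym k \<xi> * complex_of_real (w (\<xi> - k *\<^sub>R d)))"
  proof
    assume gi: "integrable lborel (\<lambda>\<xi>. Zsym k \<xi> * complex_of_real (w (\<xi> - k *\<^sub>R d)))"
    have ii: "integrable lborel (indicator (ball (0::'a) (2*k)) :: 'a \<Rightarrow> real)"
      using emeasure_bounded_finite[of "ball (0::'a) (2*k)"] by (simp add: integrable_indicator_iff)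
    have "integrable lborel (\<lambda>\<xi>. 2 * norm (Zsym k \<xi> * complex_of_real (w (\<xi> - k *\<^sub>R d))) + 3 * k * Bs * indicator (ball (0::'a) (2*k)) \<xi>)"
      using gi ii by (intro Bochner_Integration.integrable_add Bochner_Integration.integrable_mult_right Bochner_Integration.integrable_norm) auto
    note I = this
    have "integrable lborel (\<lambda>\<xi>. sqrt (k\<^sup>2 + (norm \<xi>)\<^sup>2) * w (\<xi> - k *\<^sub>R d))"
    proof (rule Bochner_Integration.integrable_bound[OF I])
      show "(\<lambda>\<xi>. sqrt (k\<^sup>2 + (norm \<xi>)\<^sup>2) * w (\<xi> - k *\<^sub>R d)) \<in> borel_measurable lborel" by measurable
      show "AE x in lborel. norm (sqrt (k\<^sup>2 + (norm x)\<^sup>2) * w (x - k *\<^sub>R d)) \<le> norm (2 * norm (Zsym k x * complex_of_real (w (x - k *\<^sub>R d))) + 3 * k * Bs * indicator (ball (0::'a) (2*k)) x)"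
      proof (rule AE_I2)
        fix x
        let ?w = "w (x - k *\<^sub>R d)"
        have a: "sqrt (k\<^sup>2 + (norm x)\<^sup>2) * ?w \<le> (2 * cmod (Zsym k x) + 3 * k * indicator (ball 0 (2*k)) x) * ?w"
          using Z2[OF k, of x] w0 by (rule mult_right_mono)
        have b: "3 * k * indicator (ball 0 (2*k)) x * ?w \<le> 3 * k * indicator (ball 0 (2*k)) x * Bs"
          using wB k by (intro mult_left_mono) (auto simp: indicator_def)
        have c: "norm (Zsym k x * complex_of_real ?w) = cmod (Zsym k x) * ?w" using w0 by (simp add: norm_mult)
        have "sqrt (k\<^sup>2 + (norm x)\<^sup>2) * ?w \<le> 2 * norm (Zsym k x * complex_of_real ?w) + 3 * k * Bs * indicator (ball (0::'a) (2*k)) x"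
          using a b unfolding c by (simp add: algebra_simps)
        moreover have "0 \<le> sqrt (k\<^sup>2 + (norm x)\<^sup>2) * ?w" using w0 by simp
        ultimately show "norm (sqrt (k\<^sup>2 + (norm x)\<^sup>2) * ?w) \<le> norm (2 * norm (Zsym k x * complex_of_real ?w) + 3 * k * Bs * indicator (ball (0::'a) (2*k)) x)"
          by simp
      qed
    qed
    with h show False by simp
  qed
qed

lemma caseA:
  fixes w :: "'a::euclidean_space \<Rightarrow> real" and d :: 'a
  assumes wm[measurable]: "w \<in> borel_measurable borel" and w0: "\<And>x. 0 \<le> w x"
    and mi: "integrable lborel (\<lambda>\<eta>. (1 + norm \<eta>) * w \<eta>)"
    and k: "k \<ge> 1" and d: "norm d = 1"
  shows "cmod ((\<i>/2) * (LINT \<xi>|lborel. Zsym k \<xi> * complex_of_real (w (\<xi> - k *\<^sub>R d))))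
           \<le> sqrt k * (LINT \<eta>|lborel. (1 + norm \<eta>) * w \<eta>)"
    and "k * (LINT \<eta>|lborel. w \<eta>) \<le> (LINT \<xi>|lborel. sqrt (k\<^sup>2 + (norm \<xi>)\<^sup>2) * w (\<xi> - k *\<^sub>R d))"
proof -
  have nd: "norm (k *\<^sub>R d) = k" using k d by simp
  have "cmod ((\<i>/2) * (LINT \<xi>|lborel. Zsym k \<xi> * complex_of_real (w (\<xi> - k *\<^sub>R d))))
     = (1/2) * cmod (LINT \<xi>|lborel. Zsym k \<xi> * complex_of_real (w (\<xi> - k *\<^sub>R d)))"
    by (simp add: norm_mult)
  also have "\<dots> \<le> (1/2) * (LINT \<xi>|lborel. cmod (Zsym k \<xi> * complex_of_real (w (\<xi> - k *\<^sub>R d))))"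
    by (intro mult_left_mono integral_norm_bound) auto
  also have "(LINT \<xi>|lborel. cmod (Zsym k \<xi> * complex_of_real (w (\<xi> - k *\<^sub>R d))))
      = (LINT \<eta>|lborel. cmod (Zsym k (k *\<^sub>R d + \<eta>) * complex_of_real (w (k *\<^sub>R d + \<eta> - k *\<^sub>R d))))"
    by (rule lint_shift) measurable
  also have "\<dots> = (LINT \<eta>|lborel. cmod (Zsym k (k *\<^sub>R d + \<eta>)) * w \<eta>)"
    using w0 by (simp add: norm_mult)
  also have "\<dots> \<le> (LINT \<eta>|lborel. 2 * sqrt k * ((1 + norm \<eta>) * w \<eta>))"
  proof (rule integral_mono')
    show "integrable lborel (\<lambda>\<eta>. 2 * sqrt k * ((1 + norm \<eta>) * w \<eta>))" using mi by simp
    fix x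
    show "cmod (Zsym k (k *\<^sub>R d + x)) * w x \<le> 2 * sqrt k * ((1 + norm x) * w x)"
      using mult_right_mono[OF Z1[OF nd k, of x] w0[of x]] by (simp add: mult.assoc)
    show "0 \<le> 2 * sqrt k * ((1 + norm x) * w x)" using w0[of x] k by simp
  qed
  also have "\<dots> = 2 * sqrt k * (LINT \<eta>|lborel. (1 + norm \<eta>) * w \<eta>)" by simp
  finally show "cmod ((\<i>/2) * (LINT \<xi>|lborel. Zsym k \<xi> * complex_of_real (w (\<xi> - k *\<^sub>R d))))
           \<le> sqrt k * (LINT \<eta>|lborel. (1 + norm \<eta>) * w \<eta>)" by simp
  have wi: "integrable lborel w"
  proof (rule Bochner_Integration.integrable_bound[OF mi])
    show "w \<in> borel_measurable lborel" by measurable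
    show "AE x in lborel. norm (w x) \<le> norm ((1 + norm x) * w x)"
    proof (rule AE_I2)
      fix x
      have "1 * w x \<le> (1 + norm x) * w x" using w0[of x] by (intro mult_right_mono) auto
      thus "norm (w x) \<le> norm ((1 + norm x) * w x)" using w0[of x] by (simp add: abs_mult)
    qed
  qed
  have hi: "integrable lborel (\<lambda>\<eta>. sqrt (k\<^sup>2 + (norm (k *\<^sub>R d + \<eta>))\<^sup>2) * w \<eta>)"
  proof (rule Bochner_Integration.integrable_bound)
    show "integrable lborel (\<lambda>\<eta>. 3 * k * ((1 + norm \<eta>) * w \<eta>))" using mi by simp
    show "(\<lambda>\<eta>. sqrt (k\<^sup>2 + (norm (k *\<^sub>R d + \<eta>))\<^sup>2) * w \<eta>) \<in> borel_measurable lborel" by measurable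
    show "AE x in lborel. norm (sqrt (k\<^sup>2 + (norm (k *\<^sub>R d + x))\<^sup>2) * w x) \<le> norm (3 * k * ((1 + norm x) * w x))"
    proof (rule AE_I2)
      fix x
      have "sqrt (k\<^sup>2 + (norm (k *\<^sub>R d + x))\<^sup>2) * w x \<le> 3 * k * (1 + norm x) * w x"
        using W2[OF nd k, of x] w0[of x] by (rule mult_right_mono)
      thus "norm (sqrt (k\<^sup>2 + (norm (k *\<^sub>R d + x))\<^sup>2) * w x) \<le> norm (3 * k * ((1 + norm x) * w x))"
        using w0[of x] k by (simp add: abs_mult mult.assoc)
    qed
  qed
  have "k * (LINT \<eta>|lborel. w \<eta>) = (LINT \<eta>|lborel. k * w \<eta>)" by simp
  also have "\<dots> \<le> (LINT \<eta>|lborel. sqrt (k\<^sup>2 + (norm (k *\<^sub>R d + \<eta>))\<^sup>2) * w \<eta>)"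
  proof (rule integral_mono)
    show "integrable lborel (\<lambda>\<eta>. k * w \<eta>)" using wi by simp
    show "integrable lborel (\<lambda>\<eta>. sqrt (k\<^sup>2 + (norm (k *\<^sub>R d + \<eta>))\<^sup>2) * w \<eta>)" by (rule hi)
    fix x
    have "k \<le> sqrt (k\<^sup>2 + (norm (k *\<^sub>R d + x))\<^sup>2)" using k by (intro real_le_rsqrt) auto
    thus "k * w x \<le> sqrt (k\<^sup>2 + (norm (k *\<^sub>R d + x))\<^sup>2) * w x" using w0[of x] by (rule mult_right_mono)
  qed
  also have "\<dots> = (LINT \<xi>|lborel. sqrt (k\<^sup>2 + (norm \<xi>)\<^sup>2) * w (\<xi> - k *\<^sub>R d))"
    using lint_shift[where c="k *\<^sub>R d" and f="\<lambda>\<xi>. sqrt (k\<^sup>2 + (norm \<xi>)\<^sup>2) * w (\<xi> - k *\<^sub>R d)"] by simp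
  finally show "k * (LINT \<eta>|lborel. w \<eta>) \<le> (LINT \<xi>|lborel. sqrt (k\<^sup>2 + (norm \<xi>)\<^sup>2) * w (\<xi> - k *\<^sub>R d))" .
qed

theorem mainTheorem12:
  fixes \<Gamma> :: "'a::euclidean_space set" and d :: 'a and \<psi> :: "'a \<Rightarrow> complex"
  assumes "DIM('a) \<in> {1, 2}"
    and "\<Gamma> \<noteq> {}" and "bounded \<Gamma>" and "open \<Gamma>"
    and "norm d = 1"
    and "\<psi> \<in> test_functions \<Gamma>" and "\<psi> \<noteq> (\<lambda>x. 0)"
  shows "\<exists>C>0. \<exists>k0>0. \<forall>k\<ge>k0.
           cmod (hypersingular_pairing k (\<lambda>x. exp (\<i> * complex_of_real (k * (d \<bullet> x))) * \<psi> x))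
             \<le> C * k powr (-1/2) *
               Hhalf_k_normsq k (\<lambda>x. exp (\<i> * complex_of_real (k * (d \<bullet> x))) * \<psi> x)"
proof -
  have cont: "continuous_on UNIV \<psi>" using assms(6) by (auto simp: test_functions_def intro: smooth_cont)
  define F where "F = fourier \<psi>"
  define w where "w = (\<lambda>\<eta>. (cmod (F \<eta>))\<^sup>2)"
  have Fm[measurable]: "F \<in> borel_measurable borel" unfolding F_def by (rule fourier_meas[OF cont])
  have wm[measurable]: "w \<in> borel_measurable borel" unfolding w_def by measurable
  define B where "B = (2 * pi) powr (- real DIM('a) / 2) * (LINT x|lborel. cmod (\<psi> x))"
  have w0: "0 \<le> w x" for x unfolding w_def by simp
  have wB: "w x \<le> B\<^sup>2" for x unfolding w_def B_def F_def
    by (intro power_mono fourier_bound) auto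
  define \<phi> where "\<phi> k = (\<lambda>x. exp (\<i> * complex_of_real (k * (d \<bullet> x))) * \<psi> x)" for k
  have pair: "hypersingular_pairing k (\<phi> k) = (\<i>/2) * (LINT \<xi>|lborel. Zsym k \<xi> * complex_of_real (w (\<xi> - k *\<^sub>R d)))" for k
    unfolding hypersingular_pairing_def \<phi>_def fourier_mod w_def F_def ..
  have hh: "Hhalf_k_normsq k (\<phi> k) = (LINT \<xi>|lborel. sqrt (k\<^sup>2 + (norm \<xi>)\<^sup>2) * w (\<xi> - k *\<^sub>R d))" for k
    unfolding Hhalf_k_normsq_def \<phi>_def fourier_mod w_def F_def ..
  have pk: "k powr (-1/2) * k = sqrt k" if "k \<ge> 1" for k :: real
  proof -
    have "k powr (-1/2) = inverse (sqrt k)" using that by (simp add: powr_minus powr_half_sqrt[symmetric])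
    hence "k powr (-1/2) * k = k / sqrt k" by (metis divide_inverse mult.commute)
    thus ?thesis using that real_div_sqrt[of k] by simp
  qed
  show ?thesis
  proof (cases "integrable lborel (\<lambda>\<eta>. (1 + norm \<eta>) * w \<eta>)")
    case True
    define A where "A = (LINT \<eta>|lborel. w \<eta>)"
    define M where "M = (LINT \<eta>|lborel. (1 + norm \<eta>) * w \<eta>)"
    define C where "C = (if A > 0 then 2 * M / A + 1 else 1)"
    have M0: "0 \<le> M" unfolding M_def using w0 by (intro integral_nonneg_AE AE_I2) auto
    have A0: "0 \<le> A" unfolding A_def using w0 by (intro integral_nonneg_AE AE_I2) auto
    have CMA: "M \<le> C * A"
    proof (cases "A > 0")
      case True
      hence "C * A = 2 * M + A" unfolding C_def by (simp add: field_simps)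
      thus ?thesis using M0 True by simp
    next
      case False
      hence A: "A = 0" using A0 by simp
      have wi: "integrable lborel w"
      proof (rule Bochner_Integration.integrable_bound[OF True])
        show "w \<in> borel_measurable lborel" by measurable
        show "AE x in lborel. norm (w x) \<le> norm ((1 + norm x) * w x)"
        proof (rule AE_I2)
          fix x
          have "1 * w x \<le> (1 + norm x) * w x" using w0[of x] by (intro mult_right_mono) auto
          thus "norm (w x) \<le> norm ((1 + norm x) * w x)" using w0[of x] by (simp add: abs_mult)
        qed
      qed
      have ae: "AE x in lborel. w x = 0"
        using A unfolding A_def by (subst (asm) integral_nonneg_eq_0_iff_AE) (use wi w0 in auto)
      have "M = 0" unfolding M_def
        by (rule integral_eq_zero_AE) (use ae in eventually_elim, simp)
      thus ?thesis using A by simp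
    qed
    have Cpos: "C > 0" unfolding C_def using M0 A0 by (auto intro: add_nonneg_pos)
    have "\<forall>k\<ge>1. cmod (hypersingular_pairing k (\<phi> k)) \<le> C * k powr (-1/2) * Hhalf_k_normsq k (\<phi> k)"
    proof (intro allI impI)
      fix k :: real assume k: "1 \<le> k"
      have "cmod (hypersingular_pairing k (\<phi> k)) \<le> sqrt k * M"
        unfolding pair M_def by (rule caseA(1)[OF wm w0 True k assms(5)])
      also have "\<dots> \<le> sqrt k * (C * A)" using CMA k by (intro mult_left_mono) auto
      also have "\<dots> = C * (k powr (-1/2) * k) * A" using pk[OF k] by simp
      also have "\<dots> = C * k powr (-1/2) * (k * A)" by simp
      also have "\<dots> \<le> C * k powr (-1/2) * Hhalf_k_normsq k (\<phi> k)"
        unfolding hh A_def using Cpos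
        by (intro mult_left_mono caseA(2)[OF wm w0 True k assms(5)]) auto
      finally show "cmod (hypersingular_pairing k (\<phi> k)) \<le> C * k powr (-1/2) * Hhalf_k_normsq k (\<phi> k)" .
    qed
    thus ?thesis using Cpos unfolding \<phi>_def by (intro exI[of _ C] conjI exI[of _ "1::real"]) auto
  next
    case False
    have "\<forall>k\<ge>1. cmod (hypersingular_pairing k (\<phi> k)) \<le> 1 * k powr (-1/2) * Hhalf_k_normsq k (\<phi> k)"
    proof (intro allI impI)
      fix k :: real assume k: "1 \<le> k"
      have k0: "k > 0" using k by simp
      have "Hhalf_k_normsq k (\<phi> k) = 0" unfolding hh
        by (rule not_integrable_integral_eq[OF caseB(1)[OF wm w0 wB False k0 assms(5)]])
      moreover have "hypersingular_pairing k (\<phi> k) = 0" unfolding pair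
        by (simp add: not_integrable_integral_eq[OF caseB(2)[OF wm w0 wB False k0 assms(5)]])
      ultimately show "cmod (hypersingular_pairing k (\<phi> k)) \<le> 1 * k powr (-1/2) * Hhalf_k_normsq k (\<phi> k)"
        by simp
    qed
    thus ?thesis unfolding \<phi>_def by (intro exI[of _ "1::real"] conjI exI[of _ "1::real"]) auto
  qed
qed

end
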